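(* Let $\mathfrak S$ be a commutative semiring and $\sigma_{\mathfrak S}$ a set of ideals of $\mathfrak S$ that contains the zero ideal $\{0\}$. Then $\sigma_{\mathfrak S}$, endowed with the ideal topology, is connected.
   Context: A semiring $(\mathfrak S,+,0,\cdot,1)$ has $(\mathfrak S,+,0)$ a commutative monoid, $(\mathfrak S,\cdot,1)$ a monoid, $0r=r0=0$, and two-sided distributivity; all semirings are commutative. An ideal is a nonempty proper subset closed under addition and under multiplication by elements of $\mathfrak S$. For an ideal $\mathfrak a$, $\mathfrak a^{\uparrow}=\{\mathfrak x\in\sigma_{\mathfrak S}\mid\mathfrak a\subseteq\mathfrak x\}$; the ideal topology on $\sigma_{\mathfrak S}$ has these sets ($\mathfrak a$ any ideal) as a subbasis of closed sets. *)

theory Defs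
  imports "HOL-Analysis.Analysis"
begin

definition semiring_ideal :: "'a::comm_semiring_1 set \<Rightarrow> bool" where
  "semiring_ideal I \<longleftrightarrow> I \<noteq> {} \<and> I \<noteq> UNIV \<and>
     (\<forall>x\<in>I. \<forall>y\<in>I. x + y \<in> I) \<and> (\<forall>r x. x \<in> I \<longrightarrow> r * x \<in> I)"

definition ideal_up :: "'a set set \<Rightarrow> 'a set \<Rightarrow> 'a set set" where
  "ideal_up \<sigma> a = {x \<in> \<sigma>. a \<subseteq> x}"

text \<open>The ideal topology on sigma: the sets ideal_up sigma a (a any ideal) form a
subbasis of closed sets; equivalently their complements in sigma form a subbasis of
open sets. sigma itself is added so that the carrier of the topology is sigma.\<close>
definition ideal_topology :: "'a::comm_semiring_1 set set \<Rightarrow> 'a set topology" where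
  "ideal_topology \<sigma> = topology_generated_by
     (insert \<sigma> ((\<lambda>a. \<sigma> - ideal_up \<sigma> a) ` {a. semiring_ideal a}))"

end

theory Submission
  imports Defs
begin

lemma ideal_zero: "semiring_ideal (a::'a::comm_semiring_1 set) \<Longrightarrow> 0 \<in> a"
  unfolding semiring_ideal_def
  by (metis ex_in_conv mult_zero_left)

lemma basic_open:
  fixes \<sigma> :: "'a::comm_semiring_1 set set"
  assumes "{0} \<in> \<sigma>" "semiring_ideal a" "x \<in> \<sigma> - ideal_up \<sigma> a" "\<forall>I\<in>\<sigma>. semiring_ideal I"
  shows "{0} \<in> \<sigma> - ideal_up \<sigma> a"
proof -
  have "\<not> a \<subseteq> {0}"
  proof
    assume "a \<subseteq> {0}"
    hence "a = {0}" using ideal_zero[OF assms(2)] by auto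
    thus False using assms(3,4) ideal_zero unfolding ideal_up_def by auto
  qed
  thus ?thesis using assms(1) unfolding ideal_up_def by auto
qed

lemma gen_open:
  fixes \<sigma> :: "'a::comm_semiring_1 set set"
  assumes "{0} \<in> \<sigma>" "\<forall>I\<in>\<sigma>. semiring_ideal I"
  shows "generate_topology_on (insert \<sigma> ((\<lambda>a. \<sigma> - ideal_up \<sigma> a) ` {a. semiring_ideal a})) U
     \<Longrightarrow> U \<noteq> {} \<Longrightarrow> {0} \<in> U"
proof (induction rule: generate_topology_on.induct)
  case Empty then show ?case by simp
next
  case (Int a b) then show ?case by auto
next
  case (UN K) then show ?case by auto
next
  case (Basis s) then show ?case using assms basic_open by auto
qed

theorem theorem3p13:
  fixes \<sigma> :: "'a::comm_semiring_1 set set"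
  assumes "\<forall>I\<in>\<sigma>. semiring_ideal I"
    and "{0} \<in> \<sigma>"
  shows "connected_space (ideal_topology \<sigma>)"
  unfolding connected_space_def ideal_topology_def openin_topology_generated_by_iff
  using gen_open[OF assms(2,1)] by blast

end
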